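(* Identify the tangent space of $\mathbb OH^2$ at $P_0=(0,0)$ with $\mathbb O^2$, a pair $(a,b)$ corresponding to the tangent vector with $du=a$, $dv=b$. Then the Riemann curvature tensor of $\mathbb OH^2$ at $P_0$ is $$\begin{aligned}R\big((a,b),(c,d),(e,f),(g,h)\big)=-\Big[&\,4\langle a,e\rangle\langle c,g\rangle-4\langle c,e\rangle\langle a,g\rangle+4\langle b,f\rangle\langle d,h\rangle-4\langle d,f\rangle\langle b,h\rangle\\&-\langle e\bar d,g\bar b\rangle+\langle e\bar b,g\bar d\rangle-\langle c\bar f,a\bar h\rangle+\langle a\bar f,c\bar h\rangle-\langle a\bar d-c\bar b,\ g\bar f-e\bar h\rangle\Big],\end{aligned}$$ i.e. the negative of the curvature tensor of $\mathbb OP^2$ at $[1,0,0]$.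
   Context: Octonions $\mathbb O=\mathbb H\oplus\mathbb H$ with product $(q_1,q_2)(p_1,p_2)=(q_1p_1-\bar p_2q_2,\ p_2q_1+q_2\bar p_1)$, conjugation $\overline{(q_1,q_2)}=(\bar q_1,-q_2)$, $\langle a,b\rangle=\mathrm{Re}(a\bar b)$, $|a|^2=\langle a,a\rangle$. $\mathbb OH^2=\{(u,v)\in\mathbb O^2:|u|^2+|v|^2<1\}$ with the Riemannian metric whose quadratic form on tangent vectors $(du,dv)=(\xi,\eta)$ is $ds^2=\frac{|\xi|^2(1-|v|^2)+|\eta|^2(1-|u|^2)+2\mathrm{Re}[(u\bar v)(\eta\bar\xi)]}{(1-|u|^2-|v|^2)^2}$. Curvature convention: in coordinates in which first derivatives of the metric vanish at the point, $R_{\alpha\beta\gamma\delta}=\tfrac12\big[\partial_\alpha\partial_\delta g_{\beta\gamma}+\partial_\beta\partial_\gamma g_{\alpha\delta}-\partial_\beta\partial_\delta g_{\alpha\gamma}-\partial_\alpha\partial_\gamma g_{\beta\delta}\big]$. *)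

theory Defs
  imports "HOL-Analysis.Analysis"
begin

datatype quat = Quat (qre: real) (qi: real) (qj: real) (qk: real)

definition qadd :: "quat \<Rightarrow> quat \<Rightarrow> quat" where
  "qadd p q = Quat (qre p + qre q) (qi p + qi q) (qj p + qj q) (qk p + qk q)"

definition qneg :: "quat \<Rightarrow> quat" where
  "qneg p = Quat (- qre p) (- qi p) (- qj p) (- qk p)"

definition qscale :: "real \<Rightarrow> quat \<Rightarrow> quat" where
  "qscale r p = Quat (r * qre p) (r * qi p) (r * qj p) (r * qk p)"

definition qcnj :: "quat \<Rightarrow> quat" where
  "qcnj p = Quat (qre p) (- qi p) (- qj p) (- qk p)"

definition qmul :: "quat \<Rightarrow> quat \<Rightarrow> quat" where
  "qmul p q = Quat
     (qre p * qre q - qi p * qi q - qj p * qj q - qk p * qk q)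
     (qre p * qi q + qi p * qre q + qj p * qk q - qk p * qj q)
     (qre p * qj q - qi p * qk q + qj p * qre q + qk p * qi q)
     (qre p * qk q + qi p * qj q - qj p * qi q + qk p * qre q)"

section \<open>Octonions O = H + H (Cayley--Dickson)\<close>

type_synonym oct = "quat \<times> quat"

definition oadd :: "oct \<Rightarrow> oct \<Rightarrow> oct" where
  "oadd x y = (qadd (fst x) (fst y), qadd (snd x) (snd y))"

definition oneg :: "oct \<Rightarrow> oct" where
  "oneg x = (qneg (fst x), qneg (snd x))"

definition osub :: "oct \<Rightarrow> oct \<Rightarrow> oct" where
  "osub x y = oadd x (oneg y)"

definition oscale :: "real \<Rightarrow> oct \<Rightarrow> oct" where
  "oscale r x = (qscale r (fst x), qscale r (snd x))"

definition ozero :: oct where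
  "ozero = (Quat 0 0 0 0, Quat 0 0 0 0)"

definition omul :: "oct \<Rightarrow> oct \<Rightarrow> oct" where
  "omul x y = (case x of (q1, q2) \<Rightarrow> case y of (p1, p2) \<Rightarrow>
      (qadd (qmul q1 p1) (qneg (qmul (qcnj p2) q2)),
       qadd (qmul p2 q1) (qmul q2 (qcnj p1))))"

definition ocnj :: "oct \<Rightarrow> oct" where
  "ocnj x = (qcnj (fst x), qneg (snd x))"

definition ore :: "oct \<Rightarrow> real" where
  "ore x = qre (fst x)"

definition oinner :: "oct \<Rightarrow> oct \<Rightarrow> real" where
  "oinner a b = ore (omul a (ocnj b))"

definition onorm2 :: "oct \<Rightarrow> real" where
  "onorm2 a = oinner a a"

text \<open>Points and tangent vectors are pairs of octonions (u,v), resp. (du,dv).\<close>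

definition padd :: "oct \<times> oct \<Rightarrow> oct \<times> oct \<Rightarrow> oct \<times> oct" where
  "padd X Y = (oadd (fst X) (fst Y), oadd (snd X) (snd Y))"

definition pscale :: "real \<Rightarrow> oct \<times> oct \<Rightarrow> oct \<times> oct" where
  "pscale r X = (oscale r (fst X), oscale r (snd X))"

definition OH2 :: "(oct \<times> oct) set" where
  "OH2 = {(u, v). onorm2 u + onorm2 v < 1}"

definition P0 :: "oct \<times> oct" where
  "P0 = (ozero, ozero)"

text \<open>Quadratic form ds^2 of the metric at the point (u,v) on the tangent vector (xi,eta).\<close>
definition OH2_Q :: "oct \<times> oct \<Rightarrow> oct \<times> oct \<Rightarrow> real" where
  "OH2_Q P T = (case P of (u, v) \<Rightarrow> case T of (\<xi>, \<eta>) \<Rightarrow>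
     (onorm2 \<xi> * (1 - onorm2 v) + onorm2 \<eta> * (1 - onorm2 u)
       + 2 * ore (omul (omul u (ocnj v)) (omul \<eta> (ocnj \<xi>))))
     / (1 - onorm2 u - onorm2 v)^2)"

definition OH2_g :: "oct \<times> oct \<Rightarrow> oct \<times> oct \<Rightarrow> oct \<times> oct \<Rightarrow> real" where
  "OH2_g P X Y = (OH2_Q P (padd X Y) - OH2_Q P (padd X (pscale (-1) Y))) / 4"

definition d2g :: "oct \<times> oct \<Rightarrow> oct \<times> oct \<Rightarrow> oct \<times> oct \<Rightarrow> oct \<times> oct \<Rightarrow> real" where
  "d2g A B C D =
     deriv (\<lambda>t. deriv (\<lambda>s. OH2_g (padd P0 (padd (pscale t A) (pscale s B))) C D) 0) 0"

text \<open>The first derivatives of the metric coefficients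
  vanish at P0 in the linear coordinates (u,v), so the paper's convention
  R_{abcd} = 1/2 [d_a d_d g_bc + d_b d_c g_ad - d_b d_d g_ac - d_a d_c g_bd]
  applies in these coordinates; contracted with X^a Y^b Z^c W^d it reads as below.\<close>
definition OH2_R_P0 :: "oct \<times> oct \<Rightarrow> oct \<times> oct \<Rightarrow> oct \<times> oct \<Rightarrow> oct \<times> oct \<Rightarrow> real" where
  "OH2_R_P0 X Y Z W =
     (d2g X W Y Z + d2g Y Z X W - d2g Y W X Z - d2g X Z Y W) / 2"

end

theory Submission
  imports Defs
begin

lemmas odefs = omul_def oadd_def oscale_def ocnj_def ore_def oneg_def osub_def ozero_def
  qadd_def qmul_def qneg_def qcnj_def qscale_def

lemma oct_cases: obtains x0 x1 x2 x3 x4 x5 x6 x7 where "x = (Quat x0 x1 x2 x3, Quat x4 x5 x6 x7)"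
  by (metis prod.exhaust quat.exhaust)

lemma omul_add_l: "omul (oadd x y) z = oadd (omul x z) (omul y z)"
  by (cases x; cases y; cases z) (simp add: odefs algebra_simps)
lemma omul_add_r: "omul z (oadd x y) = oadd (omul z x) (omul z y)"
  by (cases x; cases y; cases z) (simp add: odefs algebra_simps)
lemma omul_scale_l: "omul (oscale r x) z = oscale r (omul x z)"
  by (cases x; cases z) (simp add: odefs algebra_simps)
lemma omul_scale_r: "omul z (oscale r x) = oscale r (omul z x)"
  by (cases x; cases z) (simp add: odefs algebra_simps)
lemma ocnj_add: "ocnj (oadd x y) = oadd (ocnj x) (ocnj y)"
  by (cases x; cases y) (simp add: odefs algebra_simps)
lemma ocnj_scale: "ocnj (oscale r x) = oscale r (ocnj x)"
  by (cases x) (simp add: odefs algebra_simps)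
lemma ore_add: "ore (oadd x y) = ore x + ore y"
  by (cases x; cases y) (simp add: odefs algebra_simps)
lemma ore_scale: "ore (oscale r x) = r * ore x"
  by (cases x) (simp add: odefs algebra_simps)
lemma oadd_zero: "oadd ozero x = x"
  by (cases x) (simp add: odefs)
lemma oscale_zero: "oscale 0 x = ozero"
  by (cases x) (simp add: odefs)
lemma oneg_scale: "oneg x = oscale (-1) x"
  by (cases x) (simp add: odefs)
lemma ocnj_ocnj: "ocnj (ocnj x) = x"
  by (cases x) (simp add: odefs)
lemma ocnj_omul: "ocnj (omul x y) = omul (ocnj y) (ocnj x)"
  by (cases x; cases y) (simp add: odefs algebra_simps)
lemma oinner_sym: "oinner x y = oinner y x"
  by (cases x; cases y) (simp add: oinner_def odefs algebra_simps)
lemma oinner_add_l: "oinner (oadd x y) z = oinner x z + oinner y z"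
  by (simp add: oinner_def omul_add_l ore_add)
lemma oinner_add_r: "oinner z (oadd x y) = oinner z x + oinner z y"
  by (simp add: oinner_def omul_add_r ore_add ocnj_add)
lemma oinner_scale_l: "oinner (oscale r x) z = r * oinner x z"
  by (simp add: oinner_def omul_scale_l ore_scale)
lemma oinner_scale_r: "oinner z (oscale r x) = r * oinner z x"
  by (simp add: oinner_def omul_scale_r ore_scale ocnj_scale)
lemma ore_mul_inner: "ore (omul x y) = oinner x (ocnj y)"
  by (simp add: oinner_def ocnj_ocnj)

lemma F4: "oinner (omul x (ocnj y)) (omul z (ocnj w)) + oinner (omul x (ocnj w)) (omul z (ocnj y)) = 2 * oinner x z * oinner y w"
proof -
  obtain x0 x1 x2 x3 x4 x5 x6 x7 where x: "x = (Quat x0 x1 x2 x3, Quat x4 x5 x6 x7)" by (rule oct_cases)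
  obtain y0 y1 y2 y3 y4 y5 y6 y7 where y: "y = (Quat y0 y1 y2 y3, Quat y4 y5 y6 y7)" by (rule oct_cases)
  obtain z0 z1 z2 z3 z4 z5 z6 z7 where z: "z = (Quat z0 z1 z2 z3, Quat z4 z5 z6 z7)" by (rule oct_cases)
  obtain w0 w1 w2 w3 w4 w5 w6 w7 where w: "w = (Quat w0 w1 w2 w3, Quat w4 w5 w6 w7)" by (rule oct_cases)
  show ?thesis unfolding x y z w
    apply (simp add: oinner_def omul_def ocnj_def ore_def qadd_def qmul_def qneg_def qcnj_def)
    by algebra
qed

lemmas lin = oinner_add_l oinner_add_r oinner_scale_l oinner_scale_r omul_add_l omul_add_r
  omul_scale_l omul_scale_r ocnj_add ocnj_scale ore_add ore_scale

lemma div_aux: "X - Y = 4 * N \<Longrightarrow> (X / E - Y / E) / 4 = (N::real) / E"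
  by (simp add: diff_divide_distrib[symmetric])

lemma g_formula: "OH2_g (u,v) (C1,C2) (D1,D2) =
  (oinner C1 D1 * (1 - onorm2 v) + oinner C2 D2 * (1 - onorm2 u)
   + ore (omul (omul u (ocnj v)) (oadd (omul C2 (ocnj D1)) (omul D2 (ocnj C1)))))
  / (1 - onorm2 u - onorm2 v)^2"
  unfolding OH2_g_def OH2_Q_def padd_def pscale_def fst_conv snd_conv prod.case
  apply (rule div_aux)
  apply (simp add: onorm2_def lin)
  apply (simp add: algebra_simps oinner_sym)
  done
lemma aux1: "(D::real) \<noteq> 0 \<Longrightarrow> (a2*t*D^2 + N*(2*(b2*t*D)))/D^4 = t*(a2/D^2 + 2*b2*N/D^3)"
  by (simp add: field_simps eval_nat_numeral)
lemma d2_inner: "1 - b1*t^2 \<noteq> (0::real) \<Longrightarrow> ((\<lambda>s. (c0 + a1*t^2 + a2*t* s + a3* s^2)/(1 - (b1*t^2 + b2*t* s + b3* s^2))^2) has_field_derivative (t*(a2/(1 - b1*t^2)^2 + 2*b2*(c0+a1*t^2)/(1 - b1*t^2)^3))) (at 0)"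
  apply (rule derivative_eq_intros refl)+
  apply simp
  apply simp
  using aux1[of "1 - b1*t^2" a2 t "c0 + a1*t^2" b2] by simp
lemma d2_outer: "((\<lambda>t::real. t*(a2/(1 - b1*t^2)^2 + 2*b2*(c0+a1*t^2)/(1 - b1*t^2)^3)) has_field_derivative (a2 + 2*c0*b2)) (at 0)"
  by (auto intro!: derivative_eq_intros)
lemma d2_lemma:
  fixes F :: "real \<Rightarrow> real \<Rightarrow> real"
  assumes F: "\<And>t s. F t s = (c0 + a1*t^2 + a2*t* s + a3* s^2)/(1 - (b1*t^2 + b2*t* s + b3* s^2))^2"
  shows "deriv (\<lambda>t. deriv (\<lambda>s. F t s) 0) 0 = a2 + 2*c0*b2"
proof -
  have inner: "deriv (\<lambda>s. F t s) 0 = t*(a2/(1 - b1*t^2)^2 + 2*b2*(c0+a1*t^2)/(1 - b1*t^2)^3)"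
    if t: "t \<in> {t. 1 - b1*t^2 \<noteq> 0}" for t
    unfolding F using t by (intro DERIV_imp_deriv d2_inner) simp
  have "((\<lambda>t. deriv (\<lambda>s. F t s) 0) has_field_derivative (a2 + 2*c0*b2)) (at 0)"
  proof (rule has_field_derivative_transform_within_open[OF d2_outer, of "{t. 1 - b1*t^2 \<noteq> 0}"])
    show "open {t. 1 - b1*t^2 \<noteq> (0::real)}"
      by (intro open_Collect_neq continuous_intros)
  qed (use inner in auto)
  then show ?thesis by (rule DERIV_imp_deriv)
qed

lemma norm_expand: "onorm2 (oadd (oscale t A) (oscale s B)) = t^2 * onorm2 A + 2*t* s* oinner A B + s^2 * onorm2 B"
  by (simp add: onorm2_def lin power2_eq_square algebra_simps oinner_sym)

lemma W_expand: "ore (omul (omul (oadd (oscale t A1) (oscale s B1)) (ocnj (oadd (oscale t A2) (oscale s B2)))) Z)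
  = t^2 * ore (omul (omul A1 (ocnj A2)) Z) + t* s*(ore (omul (omul A1 (ocnj B2)) Z) + ore (omul (omul B1 (ocnj A2)) Z))
    + s^2 * ore (omul (omul B1 (ocnj B2)) Z)"
  by (simp add: lin power2_eq_square algebra_simps)

lemma d2g_formula: "d2g (A1,A2) (B1,B2) (C1,C2) (D1,D2) =
   (- (2 * oinner A2 B2) * oinner C1 D1 - (2 * oinner A1 B1) * oinner C2 D2
    + (ore (omul (omul A1 (ocnj B2)) (oadd (omul C2 (ocnj D1)) (omul D2 (ocnj C1))))
     + ore (omul (omul B1 (ocnj A2)) (oadd (omul C2 (ocnj D1)) (omul D2 (ocnj C1))))))
   + 2 * (oinner C1 D1 + oinner C2 D2) * (2 * oinner A1 B1 + 2 * oinner A2 B2)"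
  unfolding d2g_def
proof (rule d2_lemma)
  fix t s :: real
  define Z where "Z = oadd (omul C2 (ocnj D1)) (omul D2 (ocnj C1))"
  have P: "padd P0 (padd (pscale t (A1, A2)) (pscale s (B1, B2))) =
    (oadd (oscale t A1) (oscale s B1), oadd (oscale t A2) (oscale s B2))"
    by (simp add: padd_def pscale_def P0_def oadd_zero)
  show "OH2_g (padd P0 (padd (pscale t (A1, A2)) (pscale s (B1, B2)))) (C1, C2) (D1, D2) =
    ((oinner C1 D1 + oinner C2 D2)
     + (- onorm2 A2 * oinner C1 D1 - onorm2 A1 * oinner C2 D2 + ore (omul (omul A1 (ocnj A2)) Z)) * t^2
     + (- (2 * oinner A2 B2) * oinner C1 D1 - (2 * oinner A1 B1) * oinner C2 D2
        + (ore (omul (omul A1 (ocnj B2)) Z) + ore (omul (omul B1 (ocnj A2)) Z))) * t * s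
     + (- onorm2 B2 * oinner C1 D1 - onorm2 B1 * oinner C2 D2 + ore (omul (omul B1 (ocnj B2)) Z)) * s^2)
    / (1 - ((onorm2 A1 + onorm2 A2) * t^2 + (2 * oinner A1 B1 + 2 * oinner A2 B2) * t * s
            + (onorm2 B1 + onorm2 B2) * s^2))^2"
    unfolding P g_formula Z_def[symmetric] norm_expand W_expand
    by (simp add: algebra_simps)
qed

theorem theorem8p4:
  fixes a b c d e f g h :: oct
  shows "OH2_R_P0 (a, b) (c, d) (e, f) (g, h) =
    - (4 * oinner a e * oinner c g - 4 * oinner c e * oinner a g
       + 4 * oinner b f * oinner d h - 4 * oinner d f * oinner b h
       - oinner (omul e (ocnj d)) (omul g (ocnj b))
       + oinner (omul e (ocnj b)) (omul g (ocnj d))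
       - oinner (omul c (ocnj f)) (omul a (ocnj h))
       + oinner (omul a (ocnj f)) (omul c (ocnj h))
       - oinner (osub (omul a (ocnj d)) (omul c (ocnj b)))
                (osub (omul g (ocnj f)) (omul e (ocnj h))))"
  using F4[of a h e d] F4[of g b c f] F4[of c h e b] F4[of a f g d]
  unfolding OH2_R_P0_def d2g_formula osub_def oneg_scale
  apply (simp add: lin ore_mul_inner ocnj_omul ocnj_ocnj oinner_sym algebra_simps)
  by algebra
end
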